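(* Let $\alpha:M_s\to M_s$ be completely positive with $\alpha(I)\le I$. Suppose: (i) there is no projection $p$ with $0<p<I$ and $\alpha(p)\ge p$; (ii) there exists $n\ge0$ with $\alpha^{n+1}(I)=\alpha^n(I)=:v$; (iii) $v$ is positive definite (has full support). Then $\alpha(I)=I$.
   Context: $M_s$ is the algebra of complex $s\times s$ matrices with the positive semidefinite order; $\alpha^0=\mathrm{id}$. *)

theory Defs
  imports "Jordan_Normal_Form.Matrix"
begin

definition cadj :: "complex mat \<Rightarrow> complex mat" where
  "cadj A = mat (dim_col A) (dim_row A) (\<lambda>(i,j). cnj (A $$ (j,i)))"

definition qform :: "complex mat \<Rightarrow> complex vec \<Rightarrow> complex" where
  "qform A x = (\<Sum>i<dim_vec x. cnj (x $ i) * (mult_mat_vec A x $ i))"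

definition psd :: "nat \<Rightarrow> complex mat \<Rightarrow> bool" where
  "psd n A \<longleftrightarrow> A \<in> carrier_mat n n \<and>
     (\<forall>x \<in> carrier_vec n. qform A x \<in> \<real> \<and> 0 \<le> Re (qform A x))"

definition pd :: "nat \<Rightarrow> complex mat \<Rightarrow> bool" where
  "pd n A \<longleftrightarrow> A \<in> carrier_mat n n \<and>
     (\<forall>x \<in> carrier_vec n. x \<noteq> 0\<^sub>v n \<longrightarrow> qform A x \<in> \<real> \<and> 0 < Re (qform A x))"

definition mat_le :: "nat \<Rightarrow> complex mat \<Rightarrow> complex mat \<Rightarrow> bool" where
  "mat_le n A B \<longleftrightarrow> A \<in> carrier_mat n n \<and> B \<in> carrier_mat n n \<and> psd n (B - A)"

definition is_projection :: "nat \<Rightarrow> complex mat \<Rightarrow> bool" where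
  "is_projection n p \<longleftrightarrow> p \<in> carrier_mat n n \<and> p * p = p \<and> cadj p = p"

definition lin_map :: "nat \<Rightarrow> (complex mat \<Rightarrow> complex mat) \<Rightarrow> bool" where
  "lin_map s f \<longleftrightarrow>
     (\<forall>A \<in> carrier_mat s s. f A \<in> carrier_mat s s) \<and>
     (\<forall>A \<in> carrier_mat s s. \<forall>B \<in> carrier_mat s s. f (A + B) = f A + f B) \<and>
     (\<forall>A \<in> carrier_mat s s. \<forall>c. f (c \<cdot>\<^sub>m A) = c \<cdot>\<^sub>m f A)"

text \<open>For X in M_k(M_s), identified with M_{k*s}: the (i,j) block of X.\<close>
definition blk :: "nat \<Rightarrow> complex mat \<Rightarrow> nat \<Rightarrow> nat \<Rightarrow> complex mat" where
  "blk s X i j = mat s s (\<lambda>(a,b). X $$ (i*s + a, j*s + b))"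

definition ampl :: "nat \<Rightarrow> nat \<Rightarrow> (complex mat \<Rightarrow> complex mat) \<Rightarrow> complex mat \<Rightarrow> complex mat" where
  "ampl s k f X = mat (k*s) (k*s)
     (\<lambda>(p,q). f (blk s X (p div s) (q div s)) $$ (p mod s, q mod s))"

definition completely_positive :: "nat \<Rightarrow> (complex mat \<Rightarrow> complex mat) \<Rightarrow> bool" where
  "completely_positive s f \<longleftrightarrow> lin_map s f \<and>
     (\<forall>k. \<forall>X. psd (k*s) X \<longrightarrow> psd (k*s) (ampl s k f X))"

end

theory Submission
  imports Defs "Jordan_Normal_Form.Schur_Decomposition"
begin


lemma cdot_self_real: fixes w :: "complex vec"
  shows "w \<bullet>c w = of_real (Re (w \<bullet>c w)) \<and> 0 \<le> Re (w \<bullet>c w)"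
proof -
  have "w \<bullet>c w = (\<Sum>i<dim_vec w. of_real ((cmod (w $ i))^2))"
    unfolding scalar_prod_def
    by (auto intro!: sum.cong simp: complex_norm_square[symmetric] lessThan_atLeast0)
  also have "\<dots> = of_real (\<Sum>i<dim_vec w. (cmod (w $ i))^2)" by simp
  finally show ?thesis by (auto intro: sum_nonneg)
qed

lemma inv_sq: "(s::complex) * s = z \<Longrightarrow> s \<noteq> 0 \<Longrightarrow> 1/s * (1/s) * z = 1" by (auto simp: field_simps)

lemma unit_completion:
  fixes u :: "complex vec"
  assumes u: "u \<in> carrier_vec n" and u1: "u \<bullet>c u = 1"
  shows "\<exists>W. W \<in> carrier_mat n n \<and> cadj W * W = 1\<^sub>m n \<and> col W 0 = u"
proof -
  have u0: "u \<noteq> 0\<^sub>v n" using u1 u by auto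
  interpret cof_vec_space n "TYPE(complex)" .
  define b where "b = basis_completion u"
  from basis_completion[OF u u0, folded b_def]
  have span_b: "span (set b) = carrier_vec n" and dist_b: "distinct b" 
    and indep: "\<not> lin_dep (set b)" and b: "set b \<subseteq> carrier_vec n" and hdb: "hd b = u" 
    and len_b: "length b = n" by auto
  have n: "n \<noteq> 0" using u0 u by (auto intro!: eq_vecI)
  from hdb len_b n obtain vs where bv: "b = u # vs" by (cases b, auto)
  define ws where "ws = gram_schmidt n b"
  from gram_schmidt_result[OF b dist_b indep refl, folded ws_def]
  have ws: "set ws \<subseteq> carrier_vec n" "corthogonal ws" "length ws = n" 
    by (auto simp: len_b)
  from gram_schmidt_hd[OF u, of vs, folded bv] have hdws: "hd ws = u" unfolding ws_def .
  define nz where "nz = (\<lambda>w::complex vec. (1 / of_real (sqrt (Re (w \<bullet>c w)))) \<cdot>\<^sub>v w)"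
  define ws' where "ws' = map nz ws"
  have nzu: "nz u = u" unfolding nz_def u1 by simp
  have len': "length ws' = n" using ws by (simp add: ws'_def)
  have ws'c: "\<And>i. i < n \<Longrightarrow> ws' ! i \<in> carrier_vec n"
    using ws by (auto simp: ws'_def nz_def)
  have on: "ws' ! i \<bullet>c ws' ! j = (if i = j then 1 else 0)" if i: "i < n" and j: "j < n" for i j
  proof -
    have wi: "ws ! i \<in> carrier_vec n" "ws ! j \<in> carrier_vec n" using ws i j by auto
    have "ws' ! i \<bullet>c ws' ! j = (1 / of_real (sqrt (Re (ws!i \<bullet>c ws!i)))) * cnj (1 / of_real (sqrt (Re (ws!j \<bullet>c ws!j)))) * (ws ! i \<bullet>c ws ! j)"
      using wi i j ws by (simp add: ws'_def nz_def conjugate_smult_vec)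
    also have "\<dots> = (1 / of_real (sqrt (Re (ws!i \<bullet>c ws!i)))) * (1 / of_real (sqrt (Re (ws!j \<bullet>c ws!j)))) * (ws ! i \<bullet>c ws ! j)"
      by simp
    finally have eq: "ws' ! i \<bullet>c ws' ! j = (1 / of_real (sqrt (Re (ws!i \<bullet>c ws!i)))) * (1 / of_real (sqrt (Re (ws!j \<bullet>c ws!j)))) * (ws ! i \<bullet>c ws ! j)" .
    show ?thesis
    proof (cases "i = j")
      case True
      have nz0: "ws ! i \<bullet>c ws ! i \<noteq> 0" using corthogonalD[OF ws(2)] i ws by auto
      obtain r where r: "ws ! i \<bullet>c ws ! i = of_real r" "0 \<le> r" using cdot_self_real by blast
      have "r > 0" using r nz0 by auto
      have "complex_of_real (sqrt r) * complex_of_real (sqrt r) = of_real r"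
        using r(2) by (simp flip: of_real_mult)
      moreover have "complex_of_real (sqrt r) \<noteq> 0" using \<open>r > 0\<close> by simp
      ultimately show ?thesis using eq True r inv_sq by simp
    next
      case False
      then show ?thesis using eq corthogonalD[OF ws(2)] i j ws by auto
    qed
  qed
  define W where "W = mat_of_cols n ws'"
  have W: "W \<in> carrier_mat n n" unfolding W_def using len' by auto
  have "cadj W * W = 1\<^sub>m n"
  proof (rule eq_matI)
    fix i j assume i: "i < dim_row (1\<^sub>m n)" and j: "j < dim_col (1\<^sub>m n)"
    have "(cadj W * W) $$ (i,j) = (\<Sum>k<n. cnj (ws' ! i $ k) * ws' ! j $ k)"
      using i j W len' unfolding cadj_def W_def
      by (simp add: scalar_prod_def lessThan_atLeast0 mat_of_cols_def)
    also have "\<dots> = ws' ! j \<bullet>c ws' ! i"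
    proof -
      have "dim_vec (ws' ! i) = n" "dim_vec (ws' ! j) = n" using ws'c i j by auto
      then show ?thesis by (auto simp: scalar_prod_def lessThan_atLeast0 mult.commute intro!: sum.cong)
    qed
    also have "\<dots> = 1\<^sub>m n $$ (i,j)" using on i j by auto
    finally show "(cadj W * W) $$ (i,j) = 1\<^sub>m n $$ (i,j)" .
  qed (use W in \<open>auto simp: cadj_def\<close>)
  moreover have "col W 0 = u"
  proof -
    have "ws' ! 0 = u" using hdws nzu ws n by (cases ws) (auto simp: ws'_def)
    moreover have "0 < length ws'" "ws' ! 0 \<in> carrier_vec n" using n len' ws'c by auto
    ultimately show ?thesis unfolding W_def using col_mat_of_cols by metis
  qed
  ultimately show ?thesis using W by blast
qed

lemma cadj_dim[simp]: "dim_row (cadj A) = dim_col A" "dim_col (cadj A) = dim_row A"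
  by (auto simp: cadj_def)

lemma cadj_carrier[simp]: "A \<in> carrier_mat n m \<Longrightarrow> cadj A \<in> carrier_mat m n"
  by (auto simp: cadj_def)

lemma cadj_index[simp]: "i < dim_col A \<Longrightarrow> j < dim_row A \<Longrightarrow> cadj A $$ (i,j) = cnj (A $$ (j,i))"
  by (auto simp: cadj_def)

lemma cadj_cadj[simp]: "cadj (cadj A) = A"
  by (rule eq_matI) auto

lemma cadj_mult: assumes "A \<in> carrier_mat n k" "B \<in> carrier_mat k m"
  shows "cadj (A * B) = cadj B * cadj A"
  using assms by (intro eq_matI) (auto simp: scalar_prod_def mult.commute intro!: sum.cong)

lemma cadj_one[simp]: "cadj (1\<^sub>m n) = 1\<^sub>m n"
  by (rule eq_matI) auto

lemma cadj_zero[simp]: "cadj (0\<^sub>m n m) = 0\<^sub>m m n"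
  by (rule eq_matI) auto

lemma cadj_add: assumes "A \<in> carrier_mat n m" "B \<in> carrier_mat n m"
  shows "cadj (A + B) = cadj A + cadj B"
  using assms by (intro eq_matI) auto

lemma cadj_minus: assumes "A \<in> carrier_mat n m" "B \<in> carrier_mat n m"
  shows "cadj (A - B) = cadj A - cadj B"
  using assms by (intro eq_matI) auto

lemma cadj_smult: "cadj (c \<cdot>\<^sub>m A) = cnj c \<cdot>\<^sub>m cadj A"
  by (intro eq_matI) auto

definition dg :: "nat \<Rightarrow> (nat \<Rightarrow> complex) \<Rightarrow> complex mat" where
  "dg n f = mat n n (\<lambda>(i,j). if i = j then f i else 0)"

lemma dg_carrier[simp]: "dg n f \<in> carrier_mat n n" by (simp add: dg_def)
lemma dg_dim[simp]: "dim_row (dg n f) = n" "dim_col (dg n f) = n" by (simp_all add: dg_def)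

lemma normalize_unit:
  fixes w :: "complex vec"
  assumes w: "w \<in> carrier_vec n" "w \<noteq> 0\<^sub>v n"
  shows "((1 / of_real (sqrt (Re (w \<bullet>c w)))) \<cdot>\<^sub>v w) \<bullet>c ((1 / of_real (sqrt (Re (w \<bullet>c w)))) \<cdot>\<^sub>v w) = 1"
proof -
  have nz0: "w \<bullet>c w \<noteq> 0" using w by auto
  obtain r where r: "w \<bullet>c w = of_real r" "0 \<le> r" using cdot_self_real by blast
  have "r > 0" using r nz0 by auto
  have "complex_of_real (sqrt r) * complex_of_real (sqrt r) = of_real r"
    using r(2) by (simp flip: of_real_mult)
  moreover have "complex_of_real (sqrt r) \<noteq> 0" using \<open>r > 0\<close> by simp
  ultimately have *: "1 / complex_of_real (sqrt r) * (1 / complex_of_real (sqrt r)) * (w \<bullet>c w) = 1"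
    using inv_sq r by simp
  have "((1 / of_real (sqrt (Re (w \<bullet>c w)))) \<cdot>\<^sub>v w) \<bullet>c ((1 / of_real (sqrt (Re (w \<bullet>c w)))) \<cdot>\<^sub>v w)
     = 1 / complex_of_real (sqrt r) * (1 / complex_of_real (sqrt r)) * (w \<bullet>c w)"
    using r w by (simp add: conjugate_smult_vec)
  then show ?thesis using * by simp
qed

lemma spectral:
  fixes A :: "complex mat"
  assumes "A \<in> carrier_mat n n" "cadj A = A"
  shows "\<exists>U d. U \<in> carrier_mat n n \<and> cadj U * U = 1\<^sub>m n \<and> U * cadj U = 1\<^sub>m n \<and>
     A = U * dg n (\<lambda>i. of_real (d i)) * cadj U"
  using assms
proof (induction n arbitrary: A)
  case 0
  show ?case
    by (rule exI[of _ "1\<^sub>m 0"], rule exI[of _ "\<lambda>_. 0"]) (use 0 in \<open>auto intro!: eq_matI\<close>)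
next
  case (Suc m A)
  let ?n = "Suc m"
  have A: "A \<in> carrier_mat ?n ?n" and hA: "cadj A = A" using Suc.prems by auto
  obtain as where cp: "char_poly A = (\<Prod> a \<leftarrow> as. [:- a, 1:])" and las: "length as = ?n"
    using char_poly_factorized[OF A] by blast
  then obtain e as' where as: "as = e # as'" by (cases as) auto
  have "poly (char_poly A) e = 0" unfolding cp as by simp
  then have ev: "eigenvalue A e" using eigenvalue_root_char_poly[OF A] by simp
  define v where "v = find_eigenvector A e"
  have "eigenvector A v e" using find_eigenvector[OF A ev] v_def by simp
  then have v: "v \<in> carrier_vec ?n" "v \<noteq> 0\<^sub>v ?n" and Av: "A *\<^sub>v v = e \<cdot>\<^sub>v v"
    using A by (auto simp: eigenvector_def)
  define u where "u = (1 / of_real (sqrt (Re (v \<bullet>c v)))) \<cdot>\<^sub>v v"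
  have u: "u \<in> carrier_vec ?n" using v by (simp add: u_def)
  have u1: "u \<bullet>c u = 1" unfolding u_def by (rule normalize_unit[OF v])
  have Au: "A *\<^sub>v u = e \<cdot>\<^sub>v u" unfolding u_def using A v Av
    by (simp add: mult_mat_vec[OF A v(1)] smult_smult_assoc mult.commute)
  obtain W where W: "W \<in> carrier_mat ?n ?n" and WW: "cadj W * W = 1\<^sub>m ?n" and W0: "col W 0 = u"
    using unit_completion[OF u u1] by blast
  have WW': "W * cadj W = 1\<^sub>m ?n" using mat_mult_left_right_inverse[OF cadj_carrier[OF W] W WW] .
  have cW: "cadj W \<in> carrier_mat ?n ?n" using W by simp
  define A' where "A' = cadj W * A * W"
  have A': "A' \<in> carrier_mat ?n ?n" using A W cW unfolding A'_def by (meson mult_carrier_mat)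
  have hA': "cadj A' = A'"
  proof -
    have "cadj A' = cadj W * cadj (cadj W * A)"
      unfolding A'_def by (rule cadj_mult[of _ ?n ?n]) (use A W cW in \<open>meson mult_carrier_mat\<close>, rule W)
    also have "cadj (cadj W * A) = cadj A * W" using cadj_mult[OF cW A] by simp
    finally show ?thesis using hA unfolding A'_def assoc_mult_mat[OF cW A W] by simp
  qed
  have colA': "A' $$ (i,0) = (if i = 0 then e else 0)" if i: "i < ?n" for i
  proof -
    have "A' = cadj W * (A * W)" unfolding A'_def by (rule assoc_mult_mat[OF cW A W])
    then have "A' $$ (i,0) = row (cadj W) i \<bullet> col (A * W) 0" using i A W by simp
    also have "col (A * W) 0 = A *\<^sub>v col W 0" by (rule col_mult2[OF A W]) simp
    also have "\<dots> = e \<cdot>\<^sub>v u" using W0 Au by simp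
    also have "row (cadj W) i \<bullet> (e \<cdot>\<^sub>v u) = e * (row (cadj W) i \<bullet> col W 0)" using W u W0 i by simp
    also have "row (cadj W) i \<bullet> col W 0 = (cadj W * W) $$ (i,0)" using W i by simp
    finally show ?thesis using WW i by simp
  qed
  have herm: "A' $$ (i,j) = cnj (A' $$ (j,i))" if "i < ?n" "j < ?n" for i j
  proof -
    have "A' $$ (i,j) = cadj A' $$ (i,j)" using hA' by simp
    then show ?thesis using that A' by simp
  qed
  have ereal: "cnj e = e" using herm[of 0 0] colA'[of 0] by simp
  have row0: "A' $$ (0,j) = (if j = 0 then e else 0)" if "j < ?n" for j
    using herm[of 0 j] colA'[of j] that ereal by auto
  define A3 where "A3 = mat m m (\<lambda>(i,j). A' $$ (Suc i, Suc j))"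
  have A3: "A3 \<in> carrier_mat m m" by (simp add: A3_def)
  have hA3: "cadj A3 = A3"
  proof (rule eq_matI)
    fix i j assume "i < dim_row A3" "j < dim_col A3"
    then have i: "i < m" and j: "j < m" by (auto simp: A3_def)
    show "cadj A3 $$ (i,j) = A3 $$ (i,j)" using herm[of "Suc i" "Suc j"] i j by (simp add: A3_def)
  qed (auto simp: A3_def)
  obtain U3 d3 where U3: "U3 \<in> carrier_mat m m" and U3U3: "cadj U3 * U3 = 1\<^sub>m m" "U3 * cadj U3 = 1\<^sub>m m"
    and A3eq: "A3 = U3 * dg m (\<lambda>i. of_real (d3 i)) * cadj U3"
    using Suc.IH[OF A3 hA3] by blast
  define E1 where "E1 = mat 1 1 (\<lambda>_. e)"
  define B where "B = four_block_mat (1\<^sub>m 1) (0\<^sub>m 1 m) (0\<^sub>m m 1) U3"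
  define d where "d = (\<lambda>i. if i = 0 then Re e else d3 (i - 1))"
  have B: "B \<in> carrier_mat ?n ?n" using four_block_carrier_mat[of "1\<^sub>m 1" 1 1 U3 m m] U3 by (simp add: B_def)
  have A'blk: "A' = four_block_mat E1 (0\<^sub>m 1 m) (0\<^sub>m m 1) A3"
  proof (rule eq_matI)
    fix i j assume "i < dim_row (four_block_mat E1 (0\<^sub>m 1 m) (0\<^sub>m m 1) A3)"
      "j < dim_col (four_block_mat E1 (0\<^sub>m 1 m) (0\<^sub>m m 1) A3)"
    then have i: "i < ?n" and j: "j < ?n" by (auto simp: E1_def A3_def)
    have r: "four_block_mat E1 (0\<^sub>m 1 m) (0\<^sub>m m 1) A3 $$ (i,j) =
      (if i < 1 then if j < 1 then e else 0 else if j < 1 then 0 else A' $$ (i, j))"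
      using i j by (auto simp: E1_def A3_def)
    show "A' $$ (i,j) = four_block_mat E1 (0\<^sub>m 1 m) (0\<^sub>m m 1) A3 $$ (i,j)"
      unfolding r using colA'[OF i] row0[OF j] by auto
  qed (use A' in \<open>auto simp: E1_def A3_def\<close>)
  have eRe: "complex_of_real (Re e) = e" using ereal by (auto simp: complex_eq_iff)
  have Dblk: "dg ?n (\<lambda>i. of_real (d i)) = four_block_mat E1 (0\<^sub>m 1 m) (0\<^sub>m m 1) (dg m (\<lambda>i. of_real (d3 i)))"
  proof (rule eq_matI)
    fix i j assume "i < dim_row (four_block_mat E1 (0\<^sub>m 1 m) (0\<^sub>m m 1) (dg m (\<lambda>i. of_real (d3 i))))"
      "j < dim_col (four_block_mat E1 (0\<^sub>m 1 m) (0\<^sub>m m 1) (dg m (\<lambda>i. of_real (d3 i))))"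
    then have i: "i < ?n" and j: "j < ?n" by (auto simp: E1_def dg_def)
    have r: "four_block_mat E1 (0\<^sub>m 1 m) (0\<^sub>m m 1) (dg m (\<lambda>i. of_real (d3 i))) $$ (i,j) =
      (if i < 1 then if j < 1 then e else 0 else if j < 1 then 0 else (if i = j then of_real (d3 (i - 1)) else 0))"
      using i j by (auto simp: E1_def dg_def)
    show "dg ?n (\<lambda>i. of_real (d i)) $$ (i,j) = four_block_mat E1 (0\<^sub>m 1 m) (0\<^sub>m m 1) (dg m (\<lambda>i. of_real (d3 i))) $$ (i,j)"
      unfolding r using i j eRe by (auto simp: dg_def d_def)
  qed (auto simp: E1_def dg_def)
  have cB: "cadj B = four_block_mat (1\<^sub>m 1) (0\<^sub>m 1 m) (0\<^sub>m m 1) (cadj U3)"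
  proof (rule eq_matI)
    fix i j assume "i < dim_row (four_block_mat (1\<^sub>m 1) (0\<^sub>m 1 m) (0\<^sub>m m 1) (cadj U3))"
      "j < dim_col (four_block_mat (1\<^sub>m 1) (0\<^sub>m 1 m) (0\<^sub>m m 1) (cadj U3))"
    then have i: "i < ?n" and j: "j < ?n" using U3 by auto
    have r: "four_block_mat (1\<^sub>m 1) (0\<^sub>m 1 m) (0\<^sub>m m 1) (cadj U3) $$ (i,j) =
      (if i < 1 then if j < 1 then 1 else 0 else if j < 1 then 0 else cnj (U3 $$ (j - 1, i - 1)))"
      using i j U3 by auto
    have r2: "B $$ (j,i) = (if j < 1 then if i < 1 then 1 else 0 else if i < 1 then 0 else U3 $$ (j - 1, i - 1))"
      using i j U3 by (auto simp: B_def)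
    show "cadj B $$ (i,j) = four_block_mat (1\<^sub>m 1) (0\<^sub>m 1 m) (0\<^sub>m m 1) (cadj U3) $$ (i,j)"
      unfolding r using i j B r2 by auto
  qed (use B U3 in auto)
  have BB: "cadj B * B = 1\<^sub>m ?n"
    unfolding cB unfolding B_def using U3 U3U3
    by (subst mult_four_block_mat[where ?nr1.0=1 and ?n1.0=1 and ?n2.0=m and ?nr2.0=m and ?nc1.0=1 and ?nc2.0=m]) auto
  have BD: "B * dg ?n (\<lambda>i. of_real (d i)) = four_block_mat E1 (0\<^sub>m 1 m) (0\<^sub>m m 1) (U3 * dg m (\<lambda>i. of_real (d3 i)))"
    unfolding Dblk unfolding B_def using U3
    by (subst mult_four_block_mat[where ?nr1.0=1 and ?n1.0=1 and ?n2.0=m and ?nr2.0=m and ?nc1.0=1 and ?nc2.0=m])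
      (auto simp: E1_def)
  have BDB: "B * dg ?n (\<lambda>i. of_real (d i)) * cadj B = A'"
    unfolding BD cB unfolding A'blk A3eq using U3
    by (subst mult_four_block_mat[where ?nr1.0=1 and ?n1.0=1 and ?n2.0=m and ?nr2.0=m and ?nc1.0=1 and ?nc2.0=m])
      (auto simp: E1_def)
  define U where "U = W * B"
  have U: "U \<in> carrier_mat ?n ?n" using W B cW by (simp add: U_def)
  have cU: "cadj U = cadj B * cadj W" using W B cW by (simp add: U_def cadj_mult[of _ ?n ?n])
  have cBc: "cadj B \<in> carrier_mat ?n ?n" using B by simp
  have WB: "W * B \<in> carrier_mat ?n ?n" using W B by simp
  have UU: "cadj U * U = 1\<^sub>m ?n"
  proof -
    have "cadj U * U = cadj B * (cadj W * (W * B))" unfolding cU unfolding U_def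
      by (rule assoc_mult_mat[OF cBc cW WB])
    also have "cadj W * (W * B) = (cadj W * W) * B" by (rule assoc_mult_mat[OF cW W B, symmetric])
    also have "\<dots> = B" using WW B by simp
    finally show ?thesis using BB by simp
  qed
  have UU': "U * cadj U = 1\<^sub>m ?n" using mat_mult_left_right_inverse[OF cadj_carrier[OF U] U UU] .
  have cWA: "cadj W * A \<in> carrier_mat ?n ?n" using cW A by (rule mult_carrier_mat)
  have "W * A' = A * W"
  proof -
    have "W * A' = (W * (cadj W * A)) * W" unfolding A'_def
      by (rule assoc_mult_mat[OF W cWA W, symmetric])
    also have "W * (cadj W * A) = (W * cadj W) * A" by (rule assoc_mult_mat[OF W cW A, symmetric])
    also have "\<dots> = A" using WW' A by simp
    finally show ?thesis .
  qed
  then have "A = W * A' * cadj W"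
    using assoc_mult_mat[OF A W cW] WW' A by simp
  also have "\<dots> = U * dg ?n (\<lambda>i. of_real (d i)) * cadj U"
  proof -
    define D where "D = dg ?n (\<lambda>i. of_real (d i))"
    have D: "D \<in> carrier_mat ?n ?n" by (simp add: D_def)
    have DcB: "D * cadj B \<in> carrier_mat ?n ?n" using D cBc by (rule mult_carrier_mat)
    have UD: "U * D \<in> carrier_mat ?n ?n" using U D by (rule mult_carrier_mat)
    have "W * A' * cadj W = W * (B * (D * cadj B)) * cadj W"
      unfolding BDB[symmetric] D_def[symmetric] using assoc_mult_mat[OF B D cBc] by simp
    also have "W * (B * (D * cadj B)) = U * (D * cadj B)" unfolding U_def
      by (rule assoc_mult_mat[OF W B DcB, symmetric])
    also have "\<dots> = U * D * cadj B" by (rule assoc_mult_mat[OF U D cBc, symmetric])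
    also have "U * D * cadj B * cadj W = U * D * (cadj B * cadj W)" by (rule assoc_mult_mat[OF UD cBc cW])
    finally show ?thesis unfolding cU D_def .
  qed
  finally show ?case using U UU UU' by blast
qed

definition ip :: "complex vec \<Rightarrow> complex vec \<Rightarrow> complex" where
  "ip x y = (\<Sum>i<dim_vec x. cnj (x $ i) * y $ i)"

lemma qform_ip: "qform A x = ip x (A *\<^sub>v x)" by (simp add: qform_def ip_def)

lemma ip_add_right: "x \<in> carrier_vec n \<Longrightarrow> y \<in> carrier_vec n \<Longrightarrow> z \<in> carrier_vec n \<Longrightarrow>
  ip x (y + z) = ip x y + ip x z"
  by (auto simp: ip_def algebra_simps sum.distrib)

lemma ip_add_left: "x \<in> carrier_vec n \<Longrightarrow> y \<in> carrier_vec n \<Longrightarrow> z \<in> carrier_vec n \<Longrightarrow>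
  ip (x + y) z = ip x z + ip y z"
  by (auto simp: ip_def algebra_simps sum.distrib)

lemma ip_minus_right: "x \<in> carrier_vec n \<Longrightarrow> y \<in> carrier_vec n \<Longrightarrow> z \<in> carrier_vec n \<Longrightarrow>
  ip x (y - z) = ip x y - ip x z"
  by (auto simp: ip_def algebra_simps sum_subtractf)

lemma ip_minus_left: "x \<in> carrier_vec n \<Longrightarrow> y \<in> carrier_vec n \<Longrightarrow> z \<in> carrier_vec n \<Longrightarrow>
  ip (x - y) z = ip x z - ip y z"
  by (auto simp: ip_def algebra_simps sum_subtractf)

lemma ip_smult_right: "x \<in> carrier_vec n \<Longrightarrow> y \<in> carrier_vec n \<Longrightarrow> ip x (t \<cdot>\<^sub>v y) = t * ip x y"
  by (auto simp: ip_def algebra_simps sum_distrib_left)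

lemma ip_smult_left: "x \<in> carrier_vec n \<Longrightarrow> y \<in> carrier_vec n \<Longrightarrow> ip (t \<cdot>\<^sub>v x) y = cnj t * ip x y"
  by (auto simp: ip_def algebra_simps sum_distrib_left)

lemma ip_cnj: "x \<in> carrier_vec n \<Longrightarrow> y \<in> carrier_vec n \<Longrightarrow> cnj (ip x y) = ip y x"
  by (auto simp: ip_def mult.commute)

lemma ip_self_ge: "0 \<le> ip x x"
proof -
  have "ip x x = (\<Sum>i<dim_vec x. of_real ((cmod (x $ i))^2))"
    unfolding ip_def by (intro sum.cong refl) (metis complex_norm_square mult.commute)
  also have "\<dots> = of_real (\<Sum>i<dim_vec x. (cmod (x $ i))^2)" by simp
  finally show ?thesis by (auto intro: sum_nonneg simp: less_eq_complex_def)
qed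

lemma ip_self_zero: assumes "x \<in> carrier_vec n" "ip x x = 0" shows "x = 0\<^sub>v n"
proof -
  have "ip x x = (\<Sum>i<dim_vec x. of_real ((cmod (x $ i))^2))"
    unfolding ip_def by (intro sum.cong refl) (metis complex_norm_square mult.commute)
  also have "\<dots> = of_real (\<Sum>i<dim_vec x. (cmod (x $ i))^2)" by simp
  finally have eq: "ip x x = of_real (\<Sum>i<dim_vec x. (cmod (x $ i))^2)" .
  have "(\<Sum>i<dim_vec x. (cmod (x $ i))^2) = 0" using eq assms(2) by (metis of_real_eq_0_iff)
  then have "\<forall>i\<in>{..<dim_vec x}. (cmod (x $ i))^2 = 0"
    by (subst sum_nonneg_eq_0_iff[symmetric]) auto
  then show ?thesis using assms by (auto intro!: eq_vecI)
qed

lemma ip_mult: assumes M: "M \<in> carrier_mat n m" and x: "x \<in> carrier_vec n" and y: "y \<in> carrier_vec m"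
  shows "ip x (M *\<^sub>v y) = ip (cadj M *\<^sub>v x) y"
proof -
  have "ip x (M *\<^sub>v y) = (\<Sum>i<n. \<Sum>k<m. cnj (x $ i) * M $$ (i,k) * y $ k)"
    using M x y by (auto simp: ip_def scalar_prod_def sum_distrib_left lessThan_atLeast0 algebra_simps)
  also have "\<dots> = (\<Sum>k<m. \<Sum>i<n. cnj (x $ i) * M $$ (i,k) * y $ k)" by (rule sum.swap)
  also have "\<dots> = ip (cadj M *\<^sub>v x) y"
  proof -
    have "ip (cadj M *\<^sub>v x) y = (\<Sum>k<m. cnj (\<Sum>i<n. cnj (M $$ (i,k)) * x $ i) * y $ k)"
      using M x y by (auto simp: ip_def scalar_prod_def lessThan_atLeast0 intro!: sum.cong)
    also have "\<dots> = (\<Sum>k<m. (\<Sum>i<n. cnj (x $ i) * M $$ (i,k)) * y $ k)"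
      by (auto simp: mult.commute intro!: sum.cong)
    also have "\<dots> = (\<Sum>k<m. \<Sum>i<n. cnj (x $ i) * M $$ (i,k) * y $ k)"
      by (simp add: sum_distrib_right)
    finally show ?thesis by simp
  qed
  finally show ?thesis .
qed

lemma qform_add: "A \<in> carrier_mat n n \<Longrightarrow> B \<in> carrier_mat n n \<Longrightarrow> x \<in> carrier_vec n \<Longrightarrow>
  qform (A + B) x = qform A x + qform B x"
  by (simp add: qform_ip add_mult_distrib_mat_vec ip_add_right[of _ n])

lemma qform_minus: "A \<in> carrier_mat n n \<Longrightarrow> B \<in> carrier_mat n n \<Longrightarrow> x \<in> carrier_vec n \<Longrightarrow>
  qform (A - B) x = qform A x - qform B x"
  by (simp add: qform_ip minus_mult_distrib_mat_vec ip_minus_right[of _ n])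

lemma smult_mat_vec: "A \<in> carrier_mat n m \<Longrightarrow> x \<in> carrier_vec m \<Longrightarrow>
  (c \<cdot>\<^sub>m A) *\<^sub>v x = c \<cdot>\<^sub>v (A *\<^sub>v x)"
  by (intro eq_vecI) (auto simp: scalar_prod_def sum_distrib_left algebra_simps)

lemma qform_smult: "A \<in> carrier_mat n n \<Longrightarrow> x \<in> carrier_vec n \<Longrightarrow>
  qform (c \<cdot>\<^sub>m A) x = c * qform A x"
  by (simp add: qform_ip ip_smult_right[of _ n] smult_mat_vec)

lemma qform_one: "x \<in> carrier_vec n \<Longrightarrow> qform (1\<^sub>m n) x = ip x x"
  by (simp add: qform_ip)

lemma qform_zero: "x \<in> carrier_vec n \<Longrightarrow> qform (0\<^sub>m n n) x = 0"
  by (simp add: qform_def)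

lemma qform_conj: assumes U: "U \<in> carrier_mat n n" and M: "M \<in> carrier_mat n n" and x: "x \<in> carrier_vec n"
  shows "qform (U * M * cadj U) x = qform M (cadj U *\<^sub>v x)"
proof -
  have cU: "cadj U \<in> carrier_mat n n" using U by simp
  have "(U * M * cadj U) *\<^sub>v x = U *\<^sub>v (M *\<^sub>v (cadj U *\<^sub>v x))"
  proof -
    have UM: "U * M \<in> carrier_mat n n" using U M by simp
    have "(U * M * cadj U) *\<^sub>v x = (U * M) *\<^sub>v (cadj U *\<^sub>v x)"
      by (rule assoc_mult_mat_vec[OF UM cU x])
    also have "\<dots> = U *\<^sub>v (M *\<^sub>v (cadj U *\<^sub>v x))"
      by (rule assoc_mult_mat_vec[OF U M]) (use cU x in simp)
    finally show ?thesis .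
  qed
  then show ?thesis unfolding qform_ip by (metis ip_mult[OF U x] M cU x mult_mat_vec_carrier)
qed

lemma dg_mult_vec: "y \<in> carrier_vec n \<Longrightarrow> dg n f *\<^sub>v y = vec n (\<lambda>i. f i * y $ i)"
proof -
  have aux: "\<And>P a b. (if P then a else 0) * b = (if P then a * b else (0::complex))" by simp
  assume "y \<in> carrier_vec n"
  then show ?thesis by (intro eq_vecI) (auto simp: dg_def scalar_prod_def aux)
qed

lemma qform_dg: assumes y: "y \<in> carrier_vec n"
  shows "qform (dg n f) y = (\<Sum>i<n. f i * of_real ((cmod (y $ i))^2))"
proof -
  have e: "cnj z * (a * z) = a * (complex_of_real (cmod z))^2" for z a :: complex
  proof -
    have "(complex_of_real (cmod z))^2 = z * cnj z" by (rule complex_norm_square[unfolded of_real_power])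
    then show ?thesis by (simp add: algebra_simps)
  qed
  show ?thesis using y by (auto simp: qform_def dg_mult_vec e intro!: sum.cong)
qed



lemma real_quad_zero:
  fixes P C :: real
  assumes "\<And>r. 0 \<le> r * P + r^2 * C"
  shows "P = 0"
proof -
  define K where "K = \<bar>C\<bar> + 1"
  have K: "K > 0" "C - K < 0" by (auto simp: K_def)
  have "0 \<le> (-P/K) * P + (-P/K)^2 * C" by (rule assms)
  then have "0 \<le> ((-P/K) * P + (-P/K)^2 * C) * K^2" using K by simp
  also have "\<dots> = P^2 * (C - K)" using K by (simp add: field_simps power2_eq_square)
  finally have "P^2 * (C - K) \<ge> 0" .
  then have "P^2 \<le> 0" using K by (simp add: mult_le_0_iff zero_le_mult_iff)
  then show ?thesis by simp
qed

lemma cx_lemma: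
  fixes a b c :: complex
  assumes H: "\<And>t. 0 \<le> t * a + cnj t * b + t * cnj t * c"
  shows "b = 0"
proof -
  have Hr: "0 \<le> r * Re (a + b) + r^2 * Re c \<and> r * Im (a + b) + r^2 * Im c = 0" for r :: real
  proof -
    have "0 \<le> of_real r * a + cnj (of_real r) * b + of_real r * cnj (of_real r) * c" by (rule H)
    then show ?thesis by (simp add: less_eq_complex_def power2_eq_square algebra_simps)
  qed
  have Hi: "0 \<le> - r * Im (a - b) + r^2 * Re c \<and> r * Re (a - b) + r^2 * Im c = 0" for r :: real
  proof -
    have "0 \<le> (\<i> * of_real r) * a + cnj (\<i> * of_real r) * b + (\<i> * of_real r) * cnj (\<i> * of_real r) * c" by (rule H)
    then show ?thesis by (simp add: less_eq_complex_def power2_eq_square algebra_simps)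
  qed
  have p1: "Re (a + b) = 0" by (rule real_quad_zero[of _ "Re c"]) (use Hr in blast)
  have imc: "Im c = 0" using Hr[of 1] Hr[of "-1"] by simp
  have p2: "Im (a + b) = 0" using Hr[of 1] imc by simp
  have m1: "Im (a - b) = 0" using real_quad_zero[of "- Im (a - b)" "Re c"] Hi by (simp add: algebra_simps)
  have m2: "Re (a - b) = 0" using Hi[of 1] imc by simp
  show ?thesis using p1 p2 m1 m2 by (simp add: complex_eq_iff)
qed

lemma qexp: assumes A: "A \<in> carrier_mat n n" and x: "x \<in> carrier_vec n" and y: "y \<in> carrier_vec n"
  shows "qform A (x + t \<cdot>\<^sub>v y) = qform A x + t * ip x (A *\<^sub>v y) + cnj t * ip y (A *\<^sub>v x) + t * cnj t * qform A y"
proof -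
  have ty: "t \<cdot>\<^sub>v y \<in> carrier_vec n" using y by simp
  have Ax: "A *\<^sub>v x \<in> carrier_vec n" and Ay: "A *\<^sub>v y \<in> carrier_vec n" using A x y by auto
  have "A *\<^sub>v (x + t \<cdot>\<^sub>v y) = A *\<^sub>v x + t \<cdot>\<^sub>v (A *\<^sub>v y)"
    using A x y ty by (simp add: mult_add_distrib_mat_vec[OF A x ty] mult_mat_vec[OF A y])
  then show ?thesis unfolding qform_ip using x y ty Ax Ay
    by (simp add: ip_add_left[of _ n] ip_add_right[of _ n] ip_smult_left[of _ n] ip_smult_right[of _ n] algebra_simps)
qed

lemma ip_unit_left: "w \<in> carrier_vec n \<Longrightarrow> i < n \<Longrightarrow> ip (unit_vec n i) w = w $ i"
proof -
  have aux: "\<And>P x. cnj (if P then 1 else 0) * x = (if P then x else (0::complex))" by simp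
  assume "w \<in> carrier_vec n" "i < n"
  then show ?thesis by (simp add: ip_def unit_vec_def aux)
qed

lemma herm_of_real: assumes A: "A \<in> carrier_mat n n" and R: "\<And>x. x \<in> carrier_vec n \<Longrightarrow> qform A x \<in> \<real>"
  shows "cadj A = A"
proof -
  have key: "ip x (A *\<^sub>v y) = cnj (ip y (A *\<^sub>v x))" if x: "x \<in> carrier_vec n" and y: "y \<in> carrier_vec n" for x y
  proof -
    define a where "a = ip x (A *\<^sub>v y)"
    define b where "b = ip y (A *\<^sub>v x)"
    have e: "t * a + cnj t * b \<in> \<real>" for t
    proof -
      have "t * a + cnj t * b = qform A (x + t \<cdot>\<^sub>v y) - qform A x - t * cnj t * qform A y"
        using qexp[OF A x y, of t] by (simp add: a_def b_def)
      moreover have "t * cnj t \<in> \<real>" by (simp add: complex_is_Real_iff)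
      ultimately show ?thesis using R x y by (simp add: Reals_diff Reals_mult)
    qed
    have 1: "Im (a + b) = 0" using e[of 1] by (simp add: complex_is_Real_iff)
    have 2: "Re (a - b) = 0" using e[of "\<i>"] by (simp add: complex_is_Real_iff algebra_simps)
    show ?thesis using 1 2 by (simp add: a_def[symmetric] b_def[symmetric] complex_eq_iff)
  qed
  show ?thesis
  proof (rule eq_matI)
    fix i j assume "i < dim_row A" "j < dim_col A"
    then have i: "i < n" and j: "j < n" using A by auto
    have "A $$ (j,i) = ip (unit_vec n j) (A *\<^sub>v unit_vec n i)"
      using A i j by (simp add: ip_unit_left scalar_prod_right_unit)
    moreover have "A $$ (i,j) = ip (unit_vec n i) (A *\<^sub>v unit_vec n j)"
      using A i j by (simp add: ip_unit_left scalar_prod_right_unit)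
    ultimately show "cadj A $$ (i,j) = A $$ (i,j)"
      using key[of "unit_vec n i" "unit_vec n j"] i j A by simp
  qed (use A in auto)
qed

lemma kernel_lemma: assumes A: "A \<in> carrier_mat n n" and P: "\<And>w. w \<in> carrier_vec n \<Longrightarrow> 0 \<le> qform A w"
  and x: "x \<in> carrier_vec n" and q0: "qform A x = 0"
  shows "A *\<^sub>v x = 0\<^sub>v n"
proof -
  define y where "y = A *\<^sub>v x"
  have y: "y \<in> carrier_vec n" using A x by (simp add: y_def)
  have "0 \<le> t * ip x (A *\<^sub>v y) + cnj t * ip y (A *\<^sub>v x) + t * cnj t * qform A y" for t
    using P[of "x + t \<cdot>\<^sub>v y"] qexp[OF A x y, of t] q0 x y by simp
  then have "ip y (A *\<^sub>v x) = 0" by (rule cx_lemma)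
  then have "ip y y = 0" by (simp add: y_def)
  then show ?thesis using ip_self_zero[OF y] by (simp add: y_def)
qed



lemma psd_iff: "psd n A \<longleftrightarrow> A \<in> carrier_mat n n \<and> (\<forall>x\<in>carrier_vec n. 0 \<le> qform A x)"
  by (auto simp: psd_def less_eq_complex_def complex_is_Real_iff)

lemma psd_herm: "psd n A \<Longrightarrow> cadj A = A"
  by (rule herm_of_real[of _ n]) (auto simp: psd_def)

lemma conj_mult: assumes U: "U \<in> carrier_mat n n" and UU: "cadj U * U = 1\<^sub>m n"
  and M: "M \<in> carrier_mat n n" and N: "N \<in> carrier_mat n n"
  shows "(U * M * cadj U) * (U * N * cadj U) = U * (M * N) * cadj U"
proof -
  have cU: "cadj U \<in> carrier_mat n n" using U by simp
  have UM: "U * M \<in> carrier_mat n n" using U M by simp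
  have UN: "U * N \<in> carrier_mat n n" using U N by simp
  have UNc: "U * N * cadj U \<in> carrier_mat n n" using UN cU by simp
  have "(U * M * cadj U) * (U * N * cadj U) = (U * M) * (cadj U * (U * N * cadj U))"
    by (rule assoc_mult_mat[OF UM cU UNc])
  also have "cadj U * (U * N * cadj U) = (cadj U * (U * N)) * cadj U"
    by (rule assoc_mult_mat[OF cU UN cU, symmetric])
  also have "cadj U * (U * N) = (cadj U * U) * N" by (rule assoc_mult_mat[OF cU U N, symmetric])
  also have "\<dots> = N" using UU N by simp
  also have "(U * M) * (N * cadj U) = U * (M * (N * cadj U))"
    by (rule assoc_mult_mat[OF U M mult_carrier_mat[OF N cU]])
  also have "M * (N * cadj U) = (M * N) * cadj U" by (rule assoc_mult_mat[OF M N cU, symmetric])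
  also have "U * ((M * N) * cadj U) = U * (M * N) * cadj U"
    by (rule assoc_mult_mat[OF U _ cU, symmetric]) (use M N in simp)
  finally show ?thesis .
qed

lemma conj_cadj: assumes U: "U \<in> carrier_mat n n" and M: "M \<in> carrier_mat n n"
  shows "cadj (U * M * cadj U) = U * cadj M * cadj U"
proof -
  have cU: "cadj U \<in> carrier_mat n n" using U by simp
  have UM: "U * M \<in> carrier_mat n n" using U M by simp
  have "cadj (U * M * cadj U) = cadj (cadj U) * cadj (U * M)" by (rule cadj_mult[OF UM cU])
  also have "cadj (U * M) = cadj M * cadj U" by (rule cadj_mult[OF U M])
  also have "cadj (cadj U) * (cadj M * cadj U) = U * cadj M * cadj U"
    using assoc_mult_mat[OF U cadj_carrier[OF M] cU] by simp
  finally show ?thesis .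
qed

lemma cadj_dg: "cadj (dg n f) = dg n (\<lambda>i. cnj (f i))"
  by (rule eq_matI) (auto simp: dg_def)

lemma dg_mult_dg: "dg n f * dg n g = dg n (\<lambda>i. f i * g i)"
proof (rule eq_matI)
  fix i j assume "i < dim_row (dg n (\<lambda>i. f i * g i))" "j < dim_col (dg n (\<lambda>i. f i * g i))"
  then have i: "i < n" and j: "j < n" by auto
  have "(dg n f * dg n g) $$ (i,j) = row (dg n f) i \<bullet> col (dg n g) j" using i j by simp
  also have "\<dots> = (\<Sum>k\<in>{0..<n}. (if i = k then f i else 0) * (if k = j then g k else 0))"
    using i j by (simp add: scalar_prod_def dg_def)
  also have "\<dots> = (\<Sum>k\<in>{0..<n}. if k = i then (if i = j then f i * g i else 0) else 0)"
    by (rule sum.cong) auto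
  also have "\<dots> = dg n (\<lambda>i. f i * g i) $$ (i,j)" using i j by (simp add: dg_def)
  finally show "(dg n f * dg n g) $$ (i,j) = dg n (\<lambda>i. f i * g i) $$ (i,j)" .
qed auto

lemma one_dg: "dg n (\<lambda>_. 1) = 1\<^sub>m n"
  by (rule eq_matI) (auto simp: dg_def)

lemma conj_one: assumes U: "U \<in> carrier_mat n n" and UU': "U * cadj U = 1\<^sub>m n"
  shows "U * dg n (\<lambda>_. 1) * cadj U = 1\<^sub>m n"
  using U UU' by (simp add: one_dg)

lemma qform_Udg: assumes U: "U \<in> carrier_mat n n" and x: "x \<in> carrier_vec n"
  shows "qform (U * dg n (\<lambda>i. of_real (f i)) * cadj U) x
     = of_real (\<Sum>i<n. f i * (cmod ((cadj U *\<^sub>v x) $ i))^2)"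
proof -
  have y: "cadj U *\<^sub>v x \<in> carrier_vec n" using mult_mat_vec_carrier[OF cadj_carrier[OF U] x] .
  show ?thesis
    unfolding qform_conj[OF U dg_carrier x] qform_dg[OF y] by simp
qed

lemma Ucol: assumes U: "U \<in> carrier_mat n n" and UU: "cadj U * U = 1\<^sub>m n"
  and w: "w \<in> carrier_vec n"
  shows "cadj U *\<^sub>v (U *\<^sub>v w) = w"
proof -
  have "cadj U *\<^sub>v (U *\<^sub>v w) = (cadj U * U) *\<^sub>v w"
    by (rule assoc_mult_mat_vec[symmetric]) (use U w in auto)
  then show ?thesis using UU w by simp
qed

lemma sum_unit_sq: "i < n \<Longrightarrow> (\<Sum>k<n. f k * (cmod (unit_vec n i $ k))^2) = f i"
proof -
  assume i: "i < n"
  have "(\<Sum>k<n. f k * (cmod (unit_vec n i $ k))^2) = (\<Sum>k<n. if k = i then f k else 0)"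
    by (rule sum.cong) (auto simp: unit_vec_def)
  then show ?thesis using i by simp
qed

lemma cp_pos: assumes cp: "completely_positive s f" and X: "psd s X"
  shows "psd s (f X)"
proof -
  have Xc: "X \<in> carrier_mat s s" using X by (simp add: psd_def)
  have fX: "f X \<in> carrier_mat s s" using cp Xc by (simp add: completely_positive_def lin_map_def)
  have all: "\<forall>k X. psd (k*s) X \<longrightarrow> psd (k*s) (ampl s k f X)" using cp by (simp add: completely_positive_def)
  then have "psd (1*s) X \<longrightarrow> psd (1*s) (ampl s 1 f X)" by blast
  then have "psd s (ampl s 1 f X)" using X by simp
  moreover have "blk s X 0 0 = X" using Xc by (intro eq_matI) (auto simp: blk_def)
  moreover have "ampl s 1 f X = f X"
  proof (rule eq_matI)
    fix i j assume "i < dim_row (f X)" "j < dim_col (f X)"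
    then have "i < s" "j < s" using fX by auto
    then show "ampl s 1 f X $$ (i,j) = f X $$ (i,j)" using Xc
      by (simp add: ampl_def \<open>blk s X 0 0 = X\<close>)
  qed (use fX in \<open>auto simp: ampl_def\<close>)
  ultimately show ?thesis by simp
qed

lemma lin_minus: assumes L: "lin_map s f" and A: "A \<in> carrier_mat s s" and B: "B \<in> carrier_mat s s"
  shows "f (A - B) = f A - f B"
proof -
  have mB: "(-1) \<cdot>\<^sub>m B \<in> carrier_mat s s" using B by simp
  have "A - B = A + (-1) \<cdot>\<^sub>m B" using A B by (intro eq_matI) auto
  then have "f (A - B) = f A + f ((-1) \<cdot>\<^sub>m B)" using L A mB by (simp add: lin_map_def)
  also have "\<dots> = f A + (-1) \<cdot>\<^sub>m f B" using L B by (simp add: lin_map_def)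
  also have "\<dots> = f A - f B"
  proof -
    have "f A \<in> carrier_mat s s" "f B \<in> carrier_mat s s" using L A B by (auto simp: lin_map_def)
    then show ?thesis by (intro eq_matI) auto
  qed
  finally show ?thesis .
qed



lemma cneg: "0 \<le> (w::complex) \<Longrightarrow> 0 \<le> -(of_real m * w) \<Longrightarrow> m > 0 \<Longrightarrow> w = 0"
proof -
  assume a: "0 \<le> w" "0 \<le> -(of_real m * w)" "m > 0"
  then have "Im w = 0" "0 \<le> Re w" "0 \<le> - (m * Re w)" by (auto simp: less_eq_complex_def)
  moreover have "m * Re w \<ge> 0" using a(3) \<open>0 \<le> Re w\<close> by simp
  ultimately have "m * Re w = 0" by linarith
  then have "Re w = 0" using a(3) by simp
  then show "w = 0" using \<open>Im w = 0\<close> by (simp add: complex_eq_iff)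
qed

lemma nonneg_cnj: "0 \<le> (w::complex) \<Longrightarrow> cnj w = w"
  by (simp add: less_eq_complex_def complex_eq_iff)

theorem proposition9p12:
  fixes s :: nat and \<alpha> :: "complex mat \<Rightarrow> complex mat"
  assumes cp: "completely_positive s \<alpha>"
    and sub: "mat_le s (\<alpha> (1\<^sub>m s)) (1\<^sub>m s)"
    and no_proj: "\<not> (\<exists>p. is_projection s p \<and>
                      mat_le s (0\<^sub>m s s) p \<and> p \<noteq> 0\<^sub>m s s \<and>
                      mat_le s p (1\<^sub>m s) \<and> p \<noteq> 1\<^sub>m s \<and>
                      mat_le s p (\<alpha> p))"
    and stab: "\<exists>n. (\<alpha> ^^ (n+1)) (1\<^sub>m s) = (\<alpha> ^^ n) (1\<^sub>m s) \<and> pd s ((\<alpha> ^^ n) (1\<^sub>m s))"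
  shows "\<alpha> (1\<^sub>m s) = 1\<^sub>m s"
proof (cases "s = 0")
  case True
  have "\<alpha> (1\<^sub>m s) \<in> carrier_mat s s" using cp by (simp add: completely_positive_def lin_map_def)
  then show ?thesis using True by (intro eq_matI) auto
next
  case False
  then have s0: "s > 0" by simp
  have L: "lin_map s \<alpha>" using cp by (simp add: completely_positive_def)
  have Lc: "\<And>A. A \<in> carrier_mat s s \<Longrightarrow> \<alpha> A \<in> carrier_mat s s" using L by (simp add: lin_map_def)
  have Lsm: "\<And>A c. A \<in> carrier_mat s s \<Longrightarrow> \<alpha> (c \<cdot>\<^sub>m A) = c \<cdot>\<^sub>m \<alpha> A" using L by (simp add: lin_map_def)
  have P: "\<And>X. psd s X \<Longrightarrow> psd s (\<alpha> X)" using cp_pos[OF cp] .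
  obtain n where fx: "(\<alpha> ^^ (n+1)) (1\<^sub>m s) = (\<alpha> ^^ n) (1\<^sub>m s)" and pdv: "pd s ((\<alpha> ^^ n) (1\<^sub>m s))"
    using stab by blast
  define v where "v = (\<alpha> ^^ n) (1\<^sub>m s)"
  have v: "v \<in> carrier_mat s s" using pdv by (simp add: v_def pd_def)
  have av: "\<alpha> v = v" using fx by (simp add: v_def)
  have vpos: "\<And>x. x \<in> carrier_vec s \<Longrightarrow> x \<noteq> 0\<^sub>v s \<Longrightarrow> 0 < Re (qform v x)"
    using pdv by (simp add: v_def pd_def)
  have vreal: "\<And>x. x \<in> carrier_vec s \<Longrightarrow> qform v x \<in> \<real>"
  proof -
    fix x :: "complex vec" assume x: "x \<in> carrier_vec s"
    show "qform v x \<in> \<real>"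
    proof (cases "x = 0\<^sub>v s")
      case True then show ?thesis by (simp add: qform_def)
    next
      case False then show ?thesis using pdv x by (simp add: v_def pd_def)
    qed
  qed
  have hv: "cadj v = v" by (rule herm_of_real[OF v vreal])
  obtain U d where U: "U \<in> carrier_mat s s" and UU: "cadj U * U = 1\<^sub>m s" and UU': "U * cadj U = 1\<^sub>m s"
    and veq: "v = U * dg s (\<lambda>i. of_real (d i)) * cadj U"
    using spectral[OF v hv] by blast
  have cU: "cadj U \<in> carrier_mat s s" using U by simp
  define N where "N x i = (cmod ((cadj U *\<^sub>v x) $ i))^2" for x i
  have Nnn: "\<And>x i. 0 \<le> N x i" by (simp add: N_def)
  have qU: "\<And>f x. x \<in> carrier_vec s \<Longrightarrow>
     qform (U * dg s (\<lambda>i. of_real (f i)) * cadj U) x = of_real (\<Sum>i<s. f i * N x i)"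
    by (simp add: N_def qform_Udg[OF U])
  have NU: "\<And>i k. i < s \<Longrightarrow> N (U *\<^sub>v unit_vec s i) k = (cmod (unit_vec s i $ k))^2"
    by (simp add: N_def Ucol[OF U UU])
  have one_eq: "1\<^sub>m s = U * dg s (\<lambda>i. of_real ((\<lambda>_. 1) i)) * cadj U"
    using conj_one[OF U UU'] by simp
  have qone: "\<And>x. x \<in> carrier_vec s \<Longrightarrow> qform (1\<^sub>m s) x = of_real (\<Sum>i<s. N x i)"
    using qU[of _ "\<lambda>_. 1"] one_eq by simp
  have qv: "\<And>x. x \<in> carrier_vec s \<Longrightarrow> qform v x = of_real (\<Sum>i<s. d i * N x i)"
    using qU veq by simp
  have dpos: "\<And>i. i < s \<Longrightarrow> d i > 0"
  proof -
    fix i assume i: "i < s"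
    define x where "x = U *\<^sub>v unit_vec s i"
    have x: "x \<in> carrier_vec s" using U by (simp add: x_def)
    have "x \<noteq> 0\<^sub>v s"
    proof
      assume "x = 0\<^sub>v s"
      then have "cadj U *\<^sub>v x = 0\<^sub>v s" using cU by (intro eq_vecI) (auto simp: scalar_prod_def)
      moreover have "cadj U *\<^sub>v x = unit_vec s i" using Ucol[OF U UU] by (simp add: x_def)
      ultimately have "unit_vec s i = (0\<^sub>v s :: complex vec)" by simp
      then have "unit_vec s i $ i = (0\<^sub>v s :: complex vec) $ i" by simp
      then show False using i by simp
    qed
    then have "0 < Re (qform v x)" using vpos x by blast
    moreover have "qform v x = of_real (d i)"
      using qv[OF x] NU[OF i] sum_unit_sq[OF i, of d] by (simp add: x_def)
    ultimately show "d i > 0" by simp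
  qed
  define \<mu> where "\<mu> = Max (d ` {..<s})"
  have fin: "finite (d ` {..<s})" by simp
  have ne: "d ` {..<s} \<noteq> {}" using s0 by auto
  have dle: "\<And>i. i < s \<Longrightarrow> d i \<le> \<mu>" unfolding \<mu>_def using fin by (intro Max_ge) auto
  obtain i0 where i0: "i0 < s" "d i0 = \<mu>"
    using Max_in[OF fin ne] unfolding \<mu>_def[symmetric] by blast
  have mupos: "\<mu> > 0" using dpos[OF i0(1)] i0(2) by simp
  define e where "e i = (if d i = \<mu> then 1 else 0 :: real)" for i
  define E where "E = dg s (\<lambda>i. of_real (e i))"
  define q where "q = U * E * cadj U"
  define c where "c = Min (insert 1 ((\<lambda>i. \<mu> - d i) ` {i. i < s \<and> d i \<noteq> \<mu>}))"
  have cpos: "c > 0" unfolding c_def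
    using dle by (subst Min_gr_iff) (auto simp: less_le)
  have cle: "\<And>i. i < s \<Longrightarrow> c * (1 - e i) \<le> \<mu> - d i"
  proof -
    fix i assume i: "i < s"
    show "c * (1 - e i) \<le> \<mu> - d i"
    proof (cases "d i = \<mu>")
      case True then show ?thesis by (simp add: e_def)
    next
      case False
      then have "c \<le> \<mu> - d i" unfolding c_def using i by (intro Min_le) auto
      then show ?thesis using False by (simp add: e_def)
    qed
  qed
  have E: "E \<in> carrier_mat s s" by (simp add: E_def)
  have q: "q \<in> carrier_mat s s" unfolding q_def using mult_carrier_mat[OF mult_carrier_mat[OF U E] cU] .
  have qq: "q * q = q"
  proof -
    have "q * q = U * (E * E) * cadj U" unfolding q_def by (rule conj_mult[OF U UU E E])
    also have "E * E = E"
    proof -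
      have "(\<lambda>i. complex_of_real (e i) * complex_of_real (e i)) = (\<lambda>i. complex_of_real (e i))"
        by (rule ext) (simp add: e_def)
      then show ?thesis unfolding E_def dg_mult_dg by simp
    qed
    finally show ?thesis by (simp add: q_def)
  qed
  have hq: "cadj q = q" unfolding q_def conj_cadj[OF U E] by (simp add: E_def cadj_dg)
  have qq_form: "\<And>x. x \<in> carrier_vec s \<Longrightarrow> qform q x = of_real (\<Sum>i<s. e i * N x i)"
    unfolding q_def E_def by (rule qU)
  have proj: "is_projection s q" using q qq hq by (simp add: is_projection_def)
  have psdq: "psd s q" unfolding psd_iff using q qq_form Nnn
    by (auto simp: less_eq_complex_def e_def intro!: sum_nonneg)
  have q0: "mat_le s (0\<^sub>m s s) q"
    unfolding mat_le_def psd_iff using q psdq[unfolded psd_iff]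
    by (auto simp: qform_minus[of _ s] qform_zero)
  have q1: "mat_le s q (1\<^sub>m s)"
  proof -
    have "0 \<le> qform (1\<^sub>m s - q) x" if x: "x \<in> carrier_vec s" for x
    proof -
      have "qform (1\<^sub>m s - q) x = of_real (\<Sum>i<s. (1 - e i) * N x i)"
        using x q by (simp add: qform_minus[of _ s] qone qq_form algebra_simps sum_subtractf)
      then show ?thesis using Nnn by (auto simp: less_eq_complex_def e_def intro!: sum_nonneg)
    qed
    moreover have "1\<^sub>m s - q \<in> carrier_mat s s" using q by (rule minus_carrier_mat)
    ultimately show ?thesis using q by (simp add: mat_le_def psd_iff)
  qed
  have qn0: "q \<noteq> 0\<^sub>m s s"
  proof
    assume q0: "q = 0\<^sub>m s s"
    define x0 where "x0 = U *\<^sub>v unit_vec s i0"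
    have x0: "x0 \<in> carrier_vec s" using U by (simp add: x0_def)
    have "qform q x0 = of_real (e i0)"
      using qq_form[OF x0] NU[OF i0(1)] sum_unit_sq[OF i0(1), of e] by (simp add: x0_def)
    then have "qform q x0 = 1" using i0 by (simp add: e_def)
    moreover have "qform q x0 = 0" using q0 x0 by (simp add: qform_zero)
    ultimately show False by simp
  qed
  define A1 where "A1 = \<alpha> (1\<^sub>m s)"
  have A1: "A1 \<in> carrier_mat s s" unfolding A1_def by (rule Lc) simp
  have psd1A: "psd s (1\<^sub>m s - A1)" using sub by (simp add: mat_le_def A1_def)
  have c1: "1\<^sub>m s \<in> carrier_mat s s" by simp
  define M1 where "M1 = of_real \<mu> \<cdot>\<^sub>m 1\<^sub>m s - v"
  have mu1: "of_real \<mu> \<cdot>\<^sub>m 1\<^sub>m s \<in> carrier_mat s s" by simp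
  have M1: "M1 \<in> carrier_mat s s" unfolding M1_def using v by (rule minus_carrier_mat)
  have qM1: "\<And>x. x \<in> carrier_vec s \<Longrightarrow> qform M1 x = of_real (\<Sum>i<s. (\<mu> - d i) * N x i)"
    unfolding M1_def
    by (simp add: qform_minus[OF mu1 v] qform_smult[OF c1] qone qv sum_distrib_left sum_subtractf algebra_simps)
  have psdM1: "psd s M1" unfolding psd_iff using M1 qM1 Nnn dle
    by (auto simp: less_eq_complex_def intro!: sum_nonneg)
  have oq: "1\<^sub>m s - q \<in> carrier_mat s s" using q by (rule minus_carrier_mat)
  have coq: "of_real c \<cdot>\<^sub>m (1\<^sub>m s - q) \<in> carrier_mat s s" using oq by simp
  define M2 where "M2 = M1 - of_real c \<cdot>\<^sub>m (1\<^sub>m s - q)"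
  have M2: "M2 \<in> carrier_mat s s" unfolding M2_def using coq by (rule minus_carrier_mat)
  have qM2: "\<And>x. x \<in> carrier_vec s \<Longrightarrow> qform M2 x = of_real (\<Sum>i<s. (\<mu> - d i - c * (1 - e i)) * N x i)"
    unfolding M2_def
    by (simp add: qform_minus[OF M1 coq] qform_smult[OF oq] qform_minus[OF c1 q] qM1 qone qq_form
        sum_distrib_left sum_subtractf algebra_simps)
  have psdM2: "psd s M2" unfolding psd_iff using M2 qM2 Nnn cle
    by (auto simp: less_eq_complex_def intro!: sum_nonneg mult_nonneg_nonneg)
  have psdoq: "psd s (1\<^sub>m s - q)" using q1 by (simp add: mat_le_def)
  have aM1: "\<alpha> M1 = of_real \<mu> \<cdot>\<^sub>m A1 - v"
    unfolding M1_def lin_minus[OF L mu1 v] Lsm[OF c1] av A1_def ..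
  have aq: "\<alpha> q \<in> carrier_mat s s" using Lc q by simp
  have a1q: "\<alpha> (1\<^sub>m s - q) = A1 - \<alpha> q" unfolding A1_def by (rule lin_minus[OF L c1 q])
  have aoq: "\<alpha> (1\<^sub>m s - q) \<in> carrier_mat s s" using Lc oq by simp
  have aM2: "\<alpha> M2 = \<alpha> M1 - of_real c \<cdot>\<^sub>m \<alpha> (1\<^sub>m s - q)"
    unfolding M2_def lin_minus[OF L M1 coq] Lsm[OF oq] ..
  have aM1c: "\<alpha> M1 \<in> carrier_mat s s" using Lc M1 by simp
  have cUq: "cadj U * q = E * cadj U"
  proof -
    have UE: "U * E \<in> carrier_mat s s" using U E by simp
    have "cadj U * q = (cadj U * (U * E)) * cadj U" unfolding q_def
      by (rule assoc_mult_mat[OF cU UE cU, symmetric])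
    also have "cadj U * (U * E) = (cadj U * U) * E" by (rule assoc_mult_mat[OF cU U E, symmetric])
    also have "\<dots> = E" using UU E by simp
    finally show ?thesis .
  qed
  have fixpt: "\<alpha> (1\<^sub>m s - q) *\<^sub>v x = 0\<^sub>v s \<and> (1\<^sub>m s - A1) *\<^sub>v x = 0\<^sub>v s"
    if x: "x \<in> carrier_vec s" and qx: "q *\<^sub>v x = x" for x
  proof -
    have yc: "cadj U *\<^sub>v x \<in> carrier_vec s" using mult_mat_vec_carrier[OF cU x] .
    have "cadj U *\<^sub>v x = (cadj U * q) *\<^sub>v x"
      using qx assoc_mult_mat_vec[OF cU q x] by simp
    also have "\<dots> = E *\<^sub>v (cadj U *\<^sub>v x)" unfolding cUq by (rule assoc_mult_mat_vec[OF E cU x])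
    finally have yeq: "cadj U *\<^sub>v x = E *\<^sub>v (cadj U *\<^sub>v x)" .
    have Ne: "N x i = 0" if i: "i < s" and di: "d i \<noteq> \<mu>" for i
    proof -
      have "(cadj U *\<^sub>v x) $ i = (E *\<^sub>v (cadj U *\<^sub>v x)) $ i" using yeq by simp
      also have "\<dots> = of_real (e i) * (cadj U *\<^sub>v x) $ i"
        unfolding E_def dg_mult_vec[OF yc] using i by simp
      finally have "(cadj U *\<^sub>v x) $ i = 0" using di by (simp add: e_def)
      then show ?thesis by (simp add: N_def)
    qed
    have dN: "(\<Sum>i<s. d i * N x i) = (\<Sum>i<s. \<mu> * N x i)"
      by (rule sum.cong) (auto simp: Ne)
    have qvx: "qform v x = of_real \<mu> * qform (1\<^sub>m s) x"
      using qv[OF x] qone[OF x] dN by (simp add: sum_distrib_left)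
    define w where "w = qform (1\<^sub>m s - A1) x"
    have w0: "0 \<le> w" using psd1A x by (simp add: psd_iff w_def)
    have wq: "w = qform (1\<^sub>m s) x - qform A1 x" unfolding w_def by (rule qform_minus[OF c1 A1 x])
    have "qform (\<alpha> M1) x = -(of_real \<mu> * w)"
      unfolding aM1 wq using qform_minus[OF _ v x, of "of_real \<mu> \<cdot>\<^sub>m A1"] A1 qform_smult[OF A1 x] qvx
      by (simp add: algebra_simps)
    moreover have "0 \<le> qform (\<alpha> M1) x" using P[OF psdM1] x by (simp add: psd_iff)
    ultimately have w00: "w = 0" and aM10: "qform (\<alpha> M1) x = 0" using cneg[OF w0 _ mupos] by auto
    define z where "z = qform (\<alpha> (1\<^sub>m s - q)) x"
    have z0: "0 \<le> z" using P[OF psdoq] x by (simp add: psd_iff z_def)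
    have "qform (\<alpha> M2) x = -(of_real c * z)"
      unfolding aM2 z_def using qform_minus[OF aM1c _ x, of "of_real c \<cdot>\<^sub>m \<alpha> (1\<^sub>m s - q)"] aoq
        qform_smult[OF aoq x] aM10 by simp
    moreover have "0 \<le> qform (\<alpha> M2) x" using P[OF psdM2] x by (simp add: psd_iff)
    ultimately have "z = 0" using cneg[OF z0 _ cpos] by auto
    then have k1: "\<alpha> (1\<^sub>m s - q) *\<^sub>v x = 0\<^sub>v s"
      using kernel_lemma[OF aoq _ x] P[OF psdoq] by (simp add: psd_iff z_def)
    have k2: "(1\<^sub>m s - A1) *\<^sub>v x = 0\<^sub>v s"
      using kernel_lemma[OF minus_carrier_mat[OF A1] _ x] psd1A w00 by (simp add: psd_iff w_def)
    show ?thesis using k1 k2 by simp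
  qed
  define Mq where "Mq = 1\<^sub>m s - \<alpha> q"
  have Mq: "Mq \<in> carrier_mat s s" unfolding Mq_def using aq by (rule minus_carrier_mat)
  have Mq_split: "Mq = (1\<^sub>m s - A1) + \<alpha> (1\<^sub>m s - q)"
    unfolding a1q Mq_def using A1 aq by (intro eq_matI) auto
  have Mqx: "Mq *\<^sub>v x = 0\<^sub>v s" if x: "x \<in> carrier_vec s" and qx: "q *\<^sub>v x = x" for x
  proof -
    have "Mq *\<^sub>v x = (1\<^sub>m s - A1) *\<^sub>v x + \<alpha> (1\<^sub>m s - q) *\<^sub>v x"
      unfolding Mq_split by (rule add_mult_distrib_mat_vec[OF minus_carrier_mat[OF A1] aoq x])
    then show ?thesis using fixpt[OF x qx] by simp
  qed
  have psdaq: "psd s (\<alpha> q)" by (rule P[OF psdq])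
  have hMq: "cadj Mq = Mq"
    unfolding Mq_def cadj_minus[OF c1 aq] psd_herm[OF psdaq] by simp
  have main: "mat_le s q (\<alpha> q)"
  proof -
    have "0 \<le> qform (\<alpha> q - q) y" if y: "y \<in> carrier_vec s" for y
    proof -
      define x where "x = q *\<^sub>v y"
      define z where "z = y - x"
      have x: "x \<in> carrier_vec s" using mult_mat_vec_carrier[OF q y] by (simp add: x_def)
      have z: "z \<in> carrier_vec s" using x y by (simp add: z_def)
      have qx: "q *\<^sub>v x = x"
        unfolding x_def using assoc_mult_mat_vec[OF q q y] qq by simp
      have yxz: "y = x + z" unfolding z_def using x y by (intro eq_vecI) auto
      have Mqz: "Mq *\<^sub>v y = Mq *\<^sub>v z"
      proof -
        have "Mq *\<^sub>v y = Mq *\<^sub>v x + Mq *\<^sub>v z"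
          by (subst yxz) (rule mult_add_distrib_mat_vec[OF Mq x z])
        then show ?thesis using Mqx[OF x qx] mult_mat_vec_carrier[OF Mq z] by simp
      qed
      have qz: "q *\<^sub>v z = 0\<^sub>v s"
      proof -
        have "q *\<^sub>v z = q *\<^sub>v y - q *\<^sub>v x" unfolding z_def by (rule mult_minus_distrib_mat_vec[OF q y x])
        then show ?thesis using qx x by (simp add: x_def)
      qed
      have ipxz: "ip x z = 0"
      proof -
        have "ip y (q *\<^sub>v z) = ip (cadj q *\<^sub>v y) z" by (rule ip_mult[OF q y z])
        then have "ip x z = ip y (0\<^sub>v s)" using hq qz by (simp add: x_def)
        then show ?thesis using y by (simp add: ip_def)
      qed
      have aqz: "0 \<le> qform (\<alpha> q) z" using psdaq z by (simp add: psd_iff)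
      have qMqz: "qform Mq z = ip z z - qform (\<alpha> q) z"
        unfolding Mq_def qform_minus[OF c1 aq z] qform_one[OF z] ..
      have real_Mqz: "cnj (qform Mq z) = qform Mq z"
        unfolding qMqz using nonneg_cnj[OF aqz] nonneg_cnj[OF ip_self_ge[of z]] by simp
      have qMqy: "qform Mq y = qform Mq z"
      proof -
        have "qform Mq y = ip y (Mq *\<^sub>v z)" unfolding qform_ip Mqz ..
        also have "\<dots> = ip (cadj Mq *\<^sub>v y) z" by (rule ip_mult[OF Mq y z])
        also have "\<dots> = ip (Mq *\<^sub>v z) z" unfolding hMq Mqz ..
        also have "\<dots> = cnj (ip z (Mq *\<^sub>v z))"
          using ip_cnj[OF z mult_mat_vec_carrier[OF Mq z]] by simp
        also have "\<dots> = qform Mq z" using real_Mqz by (simp add: qform_ip)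
        finally show ?thesis .
      qed
      have "qform (\<alpha> q - q) y = qform (\<alpha> q) y - qform q y" by (rule qform_minus[OF aq q y])
      also have "qform (\<alpha> q) y = qform (1\<^sub>m s) y - qform Mq y"
        unfolding Mq_def qform_minus[OF c1 aq y] by simp
      also have "qform q y = ip y x" by (simp add: qform_ip x_def)
      also have "qform (1\<^sub>m s) y = ip y x + ip y z"
        unfolding qform_one[OF y] using ip_add_right[OF y x z] yxz by simp
      also have "ip y z = ip x z + ip z z"
        using ip_add_left[OF x z z] yxz by simp
      finally have "qform (\<alpha> q - q) y = qform (\<alpha> q) z"
        using ipxz qMqy qMqz by simp
      then show ?thesis using aqz by simp
    qed
    moreover have "\<alpha> q - q \<in> carrier_mat s s" using q by (rule minus_carrier_mat)
    ultimately show ?thesis using q aq by (simp add: mat_le_def psd_iff)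
  qed
  have q_one: "q = 1\<^sub>m s" using no_proj proj q0 qn0 q1 main by blast
  have eall: "d i = \<mu>" if i: "i < s" for i
  proof -
    define x where "x = U *\<^sub>v unit_vec s i"
    have x: "x \<in> carrier_vec s" using U by (simp add: x_def)
    have "qform q x = of_real (e i)"
      using qq_form[OF x] NU[OF i] sum_unit_sq[OF i, of e] by (simp add: x_def)
    moreover have "qform (1\<^sub>m s) x = 1"
    proof -
      have s1: "(\<Sum>k<s. N x k) = 1" using NU[OF i] sum_unit_sq[OF i, of "\<lambda>_. 1"] by (simp add: x_def)
      show ?thesis by (simp only: qone[OF x] s1 of_real_1)
    qed
    ultimately have "e i = 1" using q_one by simp
    then show ?thesis by (simp add: e_def split: if_splits)
  qed
  have "dg s (\<lambda>i. of_real (d i)) = of_real \<mu> \<cdot>\<^sub>m 1\<^sub>m s"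
    by (rule eq_matI) (auto simp: dg_def eall)
  then have vmu: "v = of_real \<mu> \<cdot>\<^sub>m 1\<^sub>m s"
    unfolding veq using mult_smult_distrib[OF U c1] mult_smult_assoc_mat[OF U cU] UU' U by simp
  have "of_real \<mu> \<cdot>\<^sub>m A1 = of_real \<mu> \<cdot>\<^sub>m 1\<^sub>m s"
    using av unfolding vmu Lsm[OF c1] A1_def .
  then have "(1 / of_real \<mu>) \<cdot>\<^sub>m (of_real \<mu> \<cdot>\<^sub>m A1) = (1 / of_real \<mu>) \<cdot>\<^sub>m (of_real \<mu> \<cdot>\<^sub>m 1\<^sub>m s)"
    by simp
  moreover have "\<And>B :: complex mat. (1 / of_real \<mu>) \<cdot>\<^sub>m (of_real \<mu> \<cdot>\<^sub>m B) = B"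
    using mupos by (intro eq_matI) auto
  ultimately show ?thesis unfolding A1_def by simp
qed


end
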